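(* Let $d>0$ and $0<p<1$. Any sequence of moves that transforms the distribution $\{(0,1)\}$ into a distribution $\nu$ with $\nu\{|x|\ge d\}\ge p$ contains at least $(3p)^{3/2}d^3$ moves.
   Context: A distribution is a finite set $\{(x_1,m_1),\dots,(x_k,m_k)\}$, $m_i>0$; $\mu(A)=\sum_{x_i\in A}m_i$; $M_j[\mu]=\sum_im_ix_i^j$. A move $v=([a,b],\delta)$ has $b-a=1$ and $\delta$ a signed distribution on $[a,b]$ with $M_0[\delta]=M_1[\delta]=0$; it applies to $\mu$ if $\mu+\delta$ is a distribution, and $v\mu=\mu+\delta$. A sequence of moves is applied successively. *)

theory Defs
  imports Main "HOL-Analysis.Analysis"
begin

text \<open>A (signed) distribution is represented as a finitely supported function
  real => real giving the mass at each point; a distribution has nonnegative masses.\<close>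

definition supp :: "(real \<Rightarrow> real) \<Rightarrow> real set" where
  "supp \<mu> = {x. \<mu> x \<noteq> 0}"

definition signed_distribution :: "(real \<Rightarrow> real) \<Rightarrow> bool" where
  "signed_distribution \<delta> \<longleftrightarrow> finite (supp \<delta>)"

definition distribution :: "(real \<Rightarrow> real) \<Rightarrow> bool" where
  "distribution \<mu> \<longleftrightarrow> finite (supp \<mu>) \<and> (\<forall>x. \<mu> x \<ge> 0)"

definition mass :: "(real \<Rightarrow> real) \<Rightarrow> real set \<Rightarrow> real" where
  "mass \<mu> A = (\<Sum>x \<in> supp \<mu> \<inter> A. \<mu> x)"

definition moment :: "nat \<Rightarrow> (real \<Rightarrow> real) \<Rightarrow> real" where
  "moment j \<mu> = (\<Sum>x \<in> supp \<mu>. \<mu> x * x ^ j)"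

text \<open>A move ([a,b],delta) is encoded as the pair (a, delta); b = a + 1.\<close>
type_synonym move = "real \<times> (real \<Rightarrow> real)"

definition is_move :: "move \<Rightarrow> bool" where
  "is_move v \<longleftrightarrow> (case v of (a, \<delta>) \<Rightarrow>
      signed_distribution \<delta> \<and> supp \<delta> \<subseteq> {a..a+1} \<and>
      moment 0 \<delta> = 0 \<and> moment 1 \<delta> = 0)"

definition move_applies :: "move \<Rightarrow> (real \<Rightarrow> real) \<Rightarrow> bool" where
  "move_applies v \<mu> \<longleftrightarrow> distribution (\<lambda>x. \<mu> x + snd v x)"

definition apply_move :: "move \<Rightarrow> (real \<Rightarrow> real) \<Rightarrow> (real \<Rightarrow> real)" where
  "apply_move v \<mu> = (\<lambda>x. \<mu> x + snd v x)"

inductive transforms :: "move list \<Rightarrow> (real \<Rightarrow> real) \<Rightarrow> (real \<Rightarrow> real) \<Rightarrow> bool" where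
  Nil: "transforms [] \<mu> \<mu>"
| Cons: "is_move v \<Longrightarrow> move_applies v \<mu> \<Longrightarrow> transforms vs (apply_move v \<mu>) \<nu>
          \<Longrightarrow> transforms (v # vs) \<mu> \<nu>"

definition unit_at_zero :: "real \<Rightarrow> real" where
  "unit_at_zero = (\<lambda>x. if x = 0 then 1 else 0)"

end

theory Submission
  imports Defs "HOL-Analysis.Analysis"
begin


lemma int_ind:
  fixes c :: real assumes "0 \<le> c" "c \<le> 1"
  shows "(indicator {0..c} has_integral c) {0..1}"
proof -
  have "((\<lambda>x. 1::real) has_integral c) {0..c}"
    using has_integral_const_real[of "1::real" 0 c] assms by simp
  hence "((\<lambda>x. if x \<in> {0..c} then (1::real) else 0) has_integral c) {0..1}"
    using assms by (subst has_integral_restrict) auto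
  moreover have "indicator {0..c} = (\<lambda>x::real. if x \<in> {0..c} then (1::real) else 0)"
    by (auto simp: indicator_def)
  ultimately show ?thesis by simp
qed

lemma int_indh:
  fixes c :: real assumes "0 \<le> c" "c \<le> 1"
  shows "((\<lambda>u. indicator {0..c} u * (1/2 - u)) has_integral (c*(1-c)/2)) {0..1}"
proof -
  have "((\<lambda>u. 1/2 - u) has_integral ((\<lambda>u. u/2 - u^2/2) c - (\<lambda>u. u/2 - u^2/2) 0)) {0..c}"
    apply (rule fundamental_theorem_of_calculus)
    using assms apply simp
    apply (auto intro!: derivative_eq_intros simp: has_real_derivative_iff_has_vector_derivative[symmetric])
    done
  moreover have "(\<lambda>u. u/2 - u^2/2) c - (\<lambda>u. u/2 - u^2/2) 0 = c*(1-c)/2"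
    by (simp add: field_simps power2_eq_square)
  ultimately have "((\<lambda>u::real. 1/2 - u) has_integral (c*(1-c)/2)) {0..c}"
    by metis
  hence "((\<lambda>x. if x \<in> {0..c} then 1/2 - x else 0) has_integral (c*(1-c)/2)) {0..1}"
    using assms by (subst has_integral_restrict) auto
  thus ?thesis by (rule has_integral_eq[rotated]) (simp add: indicator_def)
qed

lemma int_h: "((\<lambda>u::real. 1/2 - u) has_integral 0) {0..1}"
proof -
  have "((\<lambda>u::real. 1/2 - u) has_integral ((\<lambda>u. u/2 - u^2/2) 1 - (\<lambda>u. u/2 - u^2/2) 0)) {0..1}"
    apply (rule fundamental_theorem_of_calculus)
    apply simp
    apply (auto intro!: derivative_eq_intros simp: has_real_derivative_iff_has_vector_derivative[symmetric])
    done
  thus ?thesis by simp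
qed

lemma int_hh: "((\<lambda>u::real. (1/2 - u) * (1/2 - u)) has_integral 1/12) {0..1}"
proof -
  have "((\<lambda>u::real. (1/2 - u) * (1/2 - u)) has_integral ((\<lambda>u. u/4 - u^2/2 + u^3/3) 1 - (\<lambda>u. u/4 - u^2/2 + u^3/3) 0)) {0..1}"
    apply (rule fundamental_theorem_of_calculus)
    apply simp
    apply (auto intro!: derivative_eq_intros simp: has_real_derivative_iff_has_vector_derivative[symmetric])
    apply (simp add: algebra_simps power2_eq_square)
    done
  thus ?thesis by simp
qed

lemma int_ff:
  fixes s t :: real assumes "0 \<le> s" "s \<le> 1" "0 \<le> t" "t \<le> 1"
  shows "((\<lambda>u. (indicator {0..s} u - s) * (indicator {0..t} u - t)) has_integral (min s t - s * t)) {0..1}"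
proof -
  have e: "(\<lambda>u::real. (indicator {0..s} u - s) * (indicator {0..t} u - t)) =
     (\<lambda>u. indicator {0..min s t} u - t * indicator {0..s} u - s * indicator {0..t} u + s * t)"
    by (auto simp: indicator_def algebra_simps)
  have c: "((\<lambda>u::real. s * t) has_integral (s * t)) {0..1}"
    using has_integral_const_real[of "s * t" 0 1] by simp
  have "((\<lambda>u. indicator {0..min s t} u - t * indicator {0..s} u - s * indicator {0..t} u + s * t)
      has_integral (min s t - t * s - s * t + s * t)) {0..1}"
    by (intro has_integral_add has_integral_diff has_integral_mult_right int_ind c) (use assms in auto)
  thus ?thesis unfolding e by (simp add: algebra_simps)
qed

lemma int_fh:
  fixes s :: real assumes "0 \<le> s" "s \<le> 1"
  shows "((\<lambda>u. (indicator {0..s} u - s) * (1/2 - u)) has_integral (s*(1-s)/2)) {0..1}"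
proof -
  have e: "(\<lambda>u::real. (indicator {0..s} u - s) * (1/2 - u)) =
     (\<lambda>u. indicator {0..s} u * (1/2 - u) - s * (1/2 - u))"
    by (auto simp: algebra_simps)
  have "((\<lambda>u. indicator {0..s} u * (1/2 - u) - s * (1/2 - u)) has_integral (s*(1-s)/2 - s * 0)) {0..1}"
    by (intro has_integral_diff has_integral_mult_right int_indh int_h) (use assms in auto)
  thus ?thesis unfolding e by simp
qed

lemma G_ineq:
  fixes s w :: "'a \<Rightarrow> real"
  assumes fin: "finite I" and rng: "\<And>i. i \<in> I \<Longrightarrow> 0 \<le> s i \<and> s i \<le> 1"
  shows "3 * (\<Sum>i\<in>I. w i * (s i * (1 - s i)))^2
     \<le> (\<Sum>i\<in>I. \<Sum>j\<in>I. w i * w j * (min (s i) (s j) - s i * s j))"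
proof -
  define Q where "Q = (\<Sum>i\<in>I. w i * (s i * (1 - s i)))"
  define D where "D = (\<Sum>i\<in>I. \<Sum>j\<in>I. w i * w j * (min (s i) (s j) - s i * s j))"
  define f where "f i u = indicator {0..s i} u - s i" for i u
  define l where "l = 6 * Q"
  have eq: "((\<Sum>i\<in>I. w i * f i u) - l * (1/2 - u))^2 =
     (\<Sum>i\<in>I. \<Sum>j\<in>I. w i * w j * (f i u * f j u)) + (-2*l) * (\<Sum>i\<in>I. w i * (f i u * (1/2 - u)))
      + l^2 * ((1/2 - u) * (1/2 - u))" for u
  proof -
    have "(\<Sum>i\<in>I. w i * f i u) * (\<Sum>j\<in>I. w j * f j u) = (\<Sum>i\<in>I. \<Sum>j\<in>I. w i * w j * (f i u * f j u))"
      by (simp add: sum_product algebra_simps)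
    moreover have "(\<Sum>i\<in>I. w i * f i u) * (1/2 - u) = (\<Sum>i\<in>I. w i * (f i u * (1/2 - u)))"
      by (simp add: sum_distrib_right mult.assoc)
    moreover have sq: "(A - l*h)^2 = A*A + (-2*l)*(A*h) + l^2*(h*h)" for A h :: real
      by (simp add: power2_eq_square algebra_simps)
    ultimately show ?thesis by (simp only: sq)
  qed
  have int: "((\<lambda>u. (\<Sum>i\<in>I. \<Sum>j\<in>I. w i * w j * (f i u * f j u)) + (-2*l) * (\<Sum>i\<in>I. w i * (f i u * (1/2 - u)))
      + l^2 * ((1/2 - u) * (1/2 - u))) has_integral (D + (-2*l) * (Q/2) + l^2 * (1/12))) {0..1}"
  proof -
    have "((\<lambda>u. \<Sum>i\<in>I. \<Sum>j\<in>I. w i * w j * (f i u * f j u)) has_integral D) {0..1}"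
      unfolding D_def f_def
      by (intro has_integral_sum fin has_integral_mult_right int_ff) (use rng in auto)
    moreover have "((\<lambda>u. \<Sum>i\<in>I. w i * (f i u * (1/2 - u))) has_integral (Q/2)) {0..1}"
    proof -
      have "((\<lambda>u. \<Sum>i\<in>I. w i * (f i u * (1/2 - u))) has_integral (\<Sum>i\<in>I. w i * (s i * (1 - s i) / 2))) {0..1}"
        unfolding f_def
        by (intro has_integral_sum fin has_integral_mult_right int_fh) (use rng in auto)
      moreover have "(\<Sum>i\<in>I. w i * (s i * (1 - s i) / 2)) = Q/2"
        unfolding Q_def by (simp add: sum_divide_distrib)
      ultimately show ?thesis by metis
    qed
    ultimately show ?thesis
      by (intro has_integral_add has_integral_mult_right int_hh)
  qed
  have "0 \<le> D + (-2*l) * (Q/2) + l^2 * (1/12)"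
    by (rule has_integral_nonneg[OF int]) (subst eq[symmetric], simp)
  hence "0 \<le> D - 3 * Q^2" unfolding l_def by (simp add: power2_eq_square algebra_simps)
  thus ?thesis unfolding Q_def D_def by simp
qed



lemma tele:
  fixes A :: "real set" and w :: "real \<Rightarrow> real" and \<phi> :: "real \<Rightarrow> real"
  assumes "finite A"
  shows "(\<Sum>x\<in>A. \<phi> ((\<Sum>y\<in>{y\<in>A. y < x}. w y) + w x) - \<phi> (\<Sum>y\<in>{y\<in>A. y < x}. w y))
         = \<phi> (sum w A) - \<phi> 0"
  using assms
proof (induction A rule: finite_linorder_max_induct)
  case empty
  then show ?case by simp
next
  case (insert b A)
  have bA: "b \<notin> A" using insert by auto
  have s1: "{y \<in> insert b A. y < x} = {y \<in> A. y < x}" if "x \<in> A" for x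
    using insert that by auto
  have s2: "{y \<in> insert b A. y < b} = A" using insert by auto
  have "(\<Sum>x\<in>insert b A. \<phi> ((\<Sum>y\<in>{y\<in>insert b A. y < x}. w y) + w x) - \<phi> (\<Sum>y\<in>{y\<in>insert b A. y < x}. w y))
      = (\<phi> (sum w A + w b) - \<phi> (sum w A)) +
        (\<Sum>x\<in>A. \<phi> ((\<Sum>y\<in>{y\<in>A. y < x}. w y) + w x) - \<phi> (\<Sum>y\<in>{y\<in>A. y < x}. w y))"
  proof -
    have "(\<Sum>x\<in>insert b A. \<phi> ((\<Sum>y\<in>{y\<in>insert b A. y < x}. w y) + w x) - \<phi> (\<Sum>y\<in>{y\<in>insert b A. y < x}. w y))
       = (\<phi> ((\<Sum>y\<in>{y\<in>insert b A. y < b}. w y) + w b) - \<phi> (\<Sum>y\<in>{y\<in>insert b A. y < b}. w y)) +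
         (\<Sum>x\<in>A. \<phi> ((\<Sum>y\<in>{y\<in>insert b A. y < x}. w y) + w x) - \<phi> (\<Sum>y\<in>{y\<in>insert b A. y < x}. w y))"
      by (rule sum.insert[OF insert(1) bA])
    also have "\<dots> = (\<phi> (sum w A + w b) - \<phi> (sum w A)) +
        (\<Sum>x\<in>A. \<phi> ((\<Sum>y\<in>{y\<in>A. y < x}. w y) + w x) - \<phi> (\<Sum>y\<in>{y\<in>A. y < x}. w y))"
      by (simp only: s2 s1 cong: sum.cong)
    finally show ?thesis .
  qed
  also have "\<dots> = \<phi> (sum w (insert b A)) - \<phi> 0"
    using insert bA by (simp add: add.commute)
  finally show ?case .
qed

lemma gini:
  fixes A :: "real set" and w :: "real \<Rightarrow> real"
  assumes fin: "finite A" and nn: "\<And>x. x \<in> A \<Longrightarrow> 0 \<le> w x" and tot: "sum w A = 1"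
  shows "(\<Sum>x\<in>A. \<Sum>y\<in>A. w x * w y * \<bar>x - y\<bar>)^2 \<le> 4/3 * (\<Sum>x\<in>A. w x * x^2)"
proof -
  define L where "L x = (\<Sum>y\<in>{y\<in>A. y < x}. w y)" for x
  define U where "U x = (\<Sum>y\<in>{y\<in>A. x < y}. w y)" for x
  have sg: "(\<Sum>y\<in>A. w y * sgn (x - y)) = L x - U x" for x
  proof -
    have "(\<Sum>y\<in>A. w y * sgn (x - y)) = (\<Sum>y\<in>A. (if y < x then w y else 0) - (if x < y then w y else 0))"
      by (rule sum.cong) (auto simp: sgn_if)
    also have "\<dots> = L x - U x"
      unfolding L_def U_def using fin by (simp add: sum_subtractf sum.inter_filter)
    finally show ?thesis .
  qed
  have LU: "L x + w x + U x = 1" if "x \<in> A" for x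
  proof -
    have "(\<Sum>y\<in>A. w y) = (\<Sum>y\<in>A. (if y < x then w y else 0) + (if x < y then w y else 0) + (if y = x then w y else 0))"
      by (rule sum.cong) auto
    also have "\<dots> = L x + U x + w x"
      unfolding L_def U_def using fin that by (simp add: sum.distrib sum.inter_filter)
    finally show ?thesis using tot by simp
  qed
  have S: "(\<Sum>x\<in>A. \<Sum>y\<in>A. w x * w y * \<bar>x - y\<bar>) = 2 * (\<Sum>x\<in>A. w x * x * (L x - U x))"
  proof -
    define P where "P = (\<Sum>x\<in>A. \<Sum>y\<in>A. w x * w y * x * sgn (x - y))"
    define N where "N = (\<Sum>x\<in>A. \<Sum>y\<in>A. w x * w y * y * sgn (x - y))"
    have 1: "(\<Sum>x\<in>A. \<Sum>y\<in>A. w x * w y * \<bar>x - y\<bar>) = P - N"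
      unfolding P_def N_def by (simp add: sum_subtractf[symmetric] abs_sgn algebra_simps)
    have 2: "N = - P"
      unfolding P_def N_def
      by (subst sum.swap) (auto simp: sum_negf[symmetric] sgn_if intro!: sum.cong)
    have 3: "P = (\<Sum>x\<in>A. w x * x * (L x - U x))"
      unfolding P_def by (simp add: sg[symmetric] sum_distrib_left algebra_simps)
    show ?thesis using 1 2 3 by simp
  qed
  have CS: "(\<Sum>x\<in>A. w x * x * (L x - U x))^2 \<le> (\<Sum>x\<in>A. w x * x^2) * (\<Sum>x\<in>A. w x * (L x - U x)^2)"
  proof -
    have "(\<Sum>x\<in>A. (sqrt (w x) * x) * (sqrt (w x) * (L x - U x)))^2
        \<le> (\<Sum>x\<in>A. (sqrt (w x) * x)^2) * (\<Sum>x\<in>A. (sqrt (w x) * (L x - U x))^2)"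
      by (rule Cauchy_Schwarz_ineq_sum)
    moreover have "(\<Sum>x\<in>A. (sqrt (w x) * x) * (sqrt (w x) * (L x - U x))) = (\<Sum>x\<in>A. w x * x * (L x - U x))"
      by (rule sum.cong) (use nn in \<open>auto simp: algebra_simps\<close>)
    moreover have "(\<Sum>x\<in>A. (sqrt (w x) * x)^2) = (\<Sum>x\<in>A. w x * x^2)"
      by (rule sum.cong) (use nn in \<open>auto simp: power_mult_distrib\<close>)
    moreover have "(\<Sum>x\<in>A. (sqrt (w x) * (L x - U x))^2) = (\<Sum>x\<in>A. w x * (L x - U x)^2)"
      by (rule sum.cong) (use nn in \<open>auto simp: power_mult_distrib\<close>)
    ultimately show ?thesis by simp
  qed
  have V: "(\<Sum>x\<in>A. w x * (L x - U x)^2) \<le> 1/3"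
  proof -
    define \<phi> where "\<phi> z = (2*z - 1)^3" for z :: real
    have T: "(\<Sum>x\<in>A. \<phi> (L x + w x) - \<phi> (L x)) = 2"
      using tele[OF fin, of \<phi> w] tot unfolding L_def \<phi>_def by simp
    have "(\<Sum>x\<in>A. 6 * (w x * (L x - U x)^2)) \<le> (\<Sum>x\<in>A. \<phi> (L x + w x) - \<phi> (L x))"
    proof (rule sum_mono)
      fix x assume x: "x \<in> A"
      have u: "U x = 1 - L x - w x" using LU[OF x] by simp
      have "\<phi> (L x + w x) - \<phi> (L x) - 6 * (w x * (L x - U x)^2) = 2 * w x ^ 3"
        unfolding \<phi>_def u by (simp add: power3_eq_cube power2_eq_square algebra_simps)
      moreover have "0 \<le> w x ^ 3" using nn[OF x] by simp
      ultimately show "6 * (w x * (L x - U x)^2) \<le> \<phi> (L x + w x) - \<phi> (L x)" by linarith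
    qed
    thus ?thesis using T by (simp add: sum_distrib_left[symmetric])
  qed
  have M0: "0 \<le> (\<Sum>x\<in>A. w x * x^2)" using nn by (intro sum_nonneg) auto
  have "(\<Sum>x\<in>A. \<Sum>y\<in>A. w x * w y * \<bar>x - y\<bar>)^2 = 4 * (\<Sum>x\<in>A. w x * x * (L x - U x))^2"
    unfolding S by (simp add: power2_eq_square)
  also have "\<dots> \<le> 4 * ((\<Sum>x\<in>A. w x * x^2) * (1/3))"
    using CS V M0 by (meson mult_left_mono order_trans mult_le_cancel_left_pos zero_less_numeral)
  finally show ?thesis by simp
qed



definition Eo :: "(real \<Rightarrow> real) \<Rightarrow> (real \<Rightarrow> real) \<Rightarrow> real" where
  "Eo \<mu> f = (\<Sum>x\<in>supp \<mu>. \<mu> x * f x)"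

lemma Eo_sup:
  assumes "finite A" "supp \<mu> \<subseteq> A"
  shows "Eo \<mu> f = (\<Sum>x\<in>A. \<mu> x * f x)"
  unfolding Eo_def
  by (rule sum.mono_neutral_left) (use assms in \<open>auto simp: supp_def\<close>)

definition Iw :: "real \<Rightarrow> (real \<Rightarrow> real) \<Rightarrow> real set" where
  "Iw a \<nu> = supp \<nu> \<inter> {a<..<a+1}"

definition ext :: "real \<Rightarrow> (real \<Rightarrow> real) \<Rightarrow> (real \<Rightarrow> real)" where
  "ext a \<nu> = (\<lambda>x. (if a < x \<and> x < a+1 then 0 else \<nu> x)
      + (if x = a then (\<Sum>y\<in>Iw a \<nu>. \<nu> y * (a+1-y)) else 0)
      + (if x = a+1 then (\<Sum>y\<in>Iw a \<nu>. \<nu> y * (y-a)) else 0))"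

lemma supp_ext: "supp (ext a \<nu>) \<subseteq> supp \<nu> \<union> {a, a+1}"
  by (auto simp: supp_def ext_def split: if_splits)

lemma supp_ext_out: "x \<in> supp (ext a \<nu>) \<Longrightarrow> \<not> (a < x \<and> x < a+1)"
  by (auto simp: supp_def ext_def split: if_splits)

lemma finite_ext: "finite (supp \<nu>) \<Longrightarrow> finite (supp (ext a \<nu>))"
  using supp_ext by (meson finite.insertI finite_Un finite_subset finite.emptyI)

lemma ext_Ex:
  assumes fin: "finite (supp \<nu>)"
  shows "Eo (ext a \<nu>) f = Eo \<nu> f + (\<Sum>x\<in>Iw a \<nu>. \<nu> x * ((a+1-x) * f a + (x-a) * f (a+1) - f x))"
proof -
  define A where "A = supp \<nu> \<union> {a, a+1}"
  have fA: "finite A" using fin by (simp add: A_def)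
  define al where "al = (\<Sum>y\<in>Iw a \<nu>. \<nu> y * (a+1-y))"
  define be where "be = (\<Sum>y\<in>Iw a \<nu>. \<nu> y * (y-a))"
  have IA: "{x\<in>A. a < x \<and> x < a+1} = Iw a \<nu>" by (auto simp: A_def Iw_def)
  have "Eo (ext a \<nu>) f = (\<Sum>x\<in>A. ext a \<nu> x * f x)"
    by (rule Eo_sup[OF fA]) (use supp_ext in \<open>auto simp: A_def\<close>)
  also have "\<dots> = (\<Sum>x\<in>A. \<nu> x * f x) - (\<Sum>x\<in>A. if a < x \<and> x < a+1 then \<nu> x * f x else 0)
       + (\<Sum>x\<in>A. if x = a then al * f x else 0) + (\<Sum>x\<in>A. if x = a+1 then be * f x else 0)"
    unfolding sum_subtractf[symmetric] sum.distrib[symmetric]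
    by (rule sum.cong) (auto simp: ext_def al_def be_def algebra_simps)
  also have "(\<Sum>x\<in>A. \<nu> x * f x) = Eo \<nu> f"
    by (rule Eo_sup[OF fA, symmetric]) (auto simp: A_def)
  also have "(\<Sum>x\<in>A. if a < x \<and> x < a+1 then \<nu> x * f x else 0) = (\<Sum>x\<in>Iw a \<nu>. \<nu> x * f x)"
    by (simp add: sum.inter_filter[OF fA, symmetric] IA)
  also have "(\<Sum>x\<in>A. if x = a then al * f x else 0) = al * f a"
    using fA by (simp add: A_def)
  also have "(\<Sum>x\<in>A. if x = a+1 then be * f x else 0) = be * f (a+1)"
    using fA by (simp add: A_def)
  finally have 1: "Eo (ext a \<nu>) f = Eo \<nu> f - (\<Sum>x\<in>Iw a \<nu>. \<nu> x * f x) + al * f a + be * f (a+1)" .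
  have 2: "(\<Sum>x\<in>Iw a \<nu>. \<nu> x * ((a+1-x) * f a + (x-a) * f (a+1) - f x))
     = al * f a + be * f (a+1) - (\<Sum>x\<in>Iw a \<nu>. \<nu> x * f x)"
    unfolding al_def be_def sum_distrib_right sum_subtractf[symmetric] sum.distrib[symmetric]
    by (rule sum.cong) (auto simp: algebra_simps)
  show ?thesis using 1 2 by simp
qed

lemma move_Eo:
  assumes "finite (supp \<mu>)" "finite (supp \<delta>)"
  shows "Eo (\<lambda>x. \<mu> x + \<delta> x) f = Eo \<mu> f + Eo \<delta> f"
proof -
  define A where "A = supp \<mu> \<union> supp \<delta>"
  have fA: "finite A" using assms by (simp add: A_def)
  have "Eo (\<lambda>x. \<mu> x + \<delta> x) f = (\<Sum>x\<in>A. (\<mu> x + \<delta> x) * f x)"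
    by (rule Eo_sup[OF fA]) (auto simp: A_def supp_def)
  also have "\<dots> = (\<Sum>x\<in>A. \<mu> x * f x) + (\<Sum>x\<in>A. \<delta> x * f x)"
    by (simp add: sum.distrib[symmetric] algebra_simps)
  also have "\<dots> = Eo \<mu> f + Eo \<delta> f"
    using Eo_sup[OF fA, of \<mu> f] Eo_sup[OF fA, of \<delta> f] by (auto simp: A_def)
  finally show ?thesis .
qed

lemma move_affine:
  assumes mv: "is_move (a, \<delta>)" and g: "\<And>x. a \<le> x \<Longrightarrow> x \<le> a+1 \<Longrightarrow> g x = c0 + c1 * x"
  shows "Eo \<delta> g = 0"
proof -
  have sd: "supp \<delta> \<subseteq> {a..a+1}" and m0: "moment 0 \<delta> = 0" and m1: "moment 1 \<delta> = 0"
    using mv by (auto simp: is_move_def)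
  have "Eo \<delta> g = (\<Sum>x\<in>supp \<delta>. c0 * \<delta> x + c1 * (\<delta> x * x))"
    unfolding Eo_def by (rule sum.cong) (use sd g in \<open>auto simp: algebra_simps\<close>)
  also have "\<dots> = c0 * moment 0 \<delta> + c1 * moment 1 \<delta>"
    by (simp add: moment_def sum.distrib sum_distrib_left)
  finally show ?thesis using m0 m1 by simp
qed

lemma cvx_below:
  assumes "convex_on UNIV \<phi>" "a \<le> x" "x \<le> a+1"
  shows "\<phi> x \<le> \<phi> a + (\<phi> (a+1) - \<phi> a) * (x - a)"
proof -
  have "\<phi> ((1 - (x-a)) *\<^sub>R a + (x-a) *\<^sub>R (a+1)) \<le> (1 - (x-a)) * \<phi> a + (x-a) * \<phi> (a+1)"
    by (rule convex_onD[OF assms(1)]) (use assms in auto)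
  moreover have "(1 - (x-a)) *\<^sub>R a + (x-a) *\<^sub>R (a+1) = x" by (simp add: algebra_simps)
  ultimately show ?thesis by (simp add: algebra_simps)
qed

lemma cvx_above:
  assumes "convex_on UNIV \<phi>" "x \<le> a \<or> a+1 \<le> x"
  shows "\<phi> a + (\<phi> (a+1) - \<phi> a) * (x - a) \<le> \<phi> x"
  using assms(2)
proof
  assume x: "a+1 \<le> x"
  define t where "t = 1 / (x - a)"
  have t0: "0 < t" "t \<le> 1" using x by (auto simp: t_def)
  have "\<phi> ((1 - t) *\<^sub>R a + t *\<^sub>R x) \<le> (1 - t) * \<phi> a + t * \<phi> x"
    by (rule convex_onD[OF assms(1)]) (use t0 in auto)
  moreover have "(1 - t) *\<^sub>R a + t *\<^sub>R x = a + 1"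
  proof -
    have "(1 - t) *\<^sub>R a + t *\<^sub>R x = a + t * (x - a)" by (simp add: algebra_simps)
    moreover have "t * (x - a) = 1" using x by (simp add: t_def)
    ultimately show ?thesis by simp
  qed
  ultimately have "\<phi> (a+1) \<le> (1 - t) * \<phi> a + t * \<phi> x" by simp
  hence "(x - a) * \<phi> (a+1) \<le> (x - a) * ((1 - t) * \<phi> a + t * \<phi> x)"
    using x by (intro mult_left_mono) auto
  also have "\<dots> = (x - a - 1) * \<phi> a + \<phi> x"
  proof -
    have k: "(x - a) * t = 1" using x by (simp add: t_def)
    have "(x - a) * ((1 - t) * \<phi> a + t * \<phi> x) = (x - a) * \<phi> a - ((x - a) * t) * \<phi> a + ((x - a) * t) * \<phi> x"
      by (simp add: algebra_simps)
    also have "\<dots> = (x - a) * \<phi> a - 1 * \<phi> a + 1 * \<phi> x" by (simp only: k)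
    also have "\<dots> = (x - a - 1) * \<phi> a + \<phi> x" by (simp add: algebra_simps)
    finally show ?thesis .
  qed
  finally show ?thesis by (simp add: algebra_simps)
next
  assume x: "x \<le> a"
  show ?thesis
  proof (cases "x = a")
    case True then show ?thesis by simp
  next
    case False
    hence x: "x < a" using x by simp
    define t where "t = (a - x) / (a + 1 - x)"
    have t0: "0 \<le> t" "t \<le> 1" using x by (auto simp: t_def)
    have "\<phi> ((1 - t) *\<^sub>R x + t *\<^sub>R (a+1)) \<le> (1 - t) * \<phi> x + t * \<phi> (a+1)"
      by (rule convex_onD[OF assms(1)]) (use t0 in auto)
    moreover have "(1 - t) *\<^sub>R x + t *\<^sub>R (a+1) = a"
    proof -
      have "(1 - t) *\<^sub>R x + t *\<^sub>R (a+1) = x + t * (a + 1 - x)" by (simp add: algebra_simps)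
      moreover have "t * (a + 1 - x) = a - x" using x by (simp add: t_def)
      ultimately show ?thesis by simp
    qed
    ultimately have "\<phi> a \<le> (1 - t) * \<phi> x + t * \<phi> (a+1)" by simp
    hence "(a + 1 - x) * \<phi> a \<le> (a + 1 - x) * ((1 - t) * \<phi> x + t * \<phi> (a+1))"
      using x by (intro mult_left_mono) auto
    also have "\<dots> = \<phi> x + (a - x) * \<phi> (a+1)"
    proof -
      have k: "(a + 1 - x) * t = a - x" using x by (simp add: t_def)
      have "(a + 1 - x) * ((1 - t) * \<phi> x + t * \<phi> (a+1)) = (a + 1 - x) * \<phi> x - ((a + 1 - x) * t) * \<phi> x + ((a + 1 - x) * t) * \<phi> (a+1)"
        by (simp add: algebra_simps)
      also have "\<dots> = (a + 1 - x) * \<phi> x - (a - x) * \<phi> x + (a - x) * \<phi> (a+1)" by (simp only: k)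
      also have "\<dots> = \<phi> x + (a - x) * \<phi> (a+1)" by (simp add: algebra_simps)
      finally show ?thesis .
    qed
    finally show ?thesis by (simp add: algebra_simps)
  qed
qed

lemma cvx_max:
  assumes "convex_on UNIV \<phi>"
  shows "convex_on UNIV (\<lambda>x. max (\<phi> x) (c0 + c1 * x))"
proof (rule convex_onI)
  fix t x y :: real assume t: "0 < t" "t < 1"
  have 1: "\<phi> ((1 - t) *\<^sub>R x + t *\<^sub>R y) \<le> (1 - t) * \<phi> x + t * \<phi> y"
    by (rule convex_onD[OF assms]) (use t in auto)
  have a: "(1 - t) * \<phi> x \<le> (1 - t) * max (\<phi> x) (c0 + c1 * x)"
    using t by (intro mult_left_mono) auto
  have b: "t * \<phi> y \<le> t * max (\<phi> y) (c0 + c1 * y)"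
    using t by (intro mult_left_mono) auto
  have c: "(1 - t) * (c0 + c1 * x) \<le> (1 - t) * max (\<phi> x) (c0 + c1 * x)"
    using t by (intro mult_left_mono) auto
  have d: "t * (c0 + c1 * y) \<le> t * max (\<phi> y) (c0 + c1 * y)"
    using t by (intro mult_left_mono) auto
  have e: "c0 + c1 * ((1 - t) *\<^sub>R x + t *\<^sub>R y) = (1 - t) * (c0 + c1 * x) + t * (c0 + c1 * y)"
    by (simp add: algebra_simps)
  show "max (\<phi> ((1 - t) *\<^sub>R x + t *\<^sub>R y)) (c0 + c1 * ((1 - t) *\<^sub>R x + t *\<^sub>R y))
        \<le> (1 - t) * max (\<phi> x) (c0 + c1 * x) + t * max (\<phi> y) (c0 + c1 * y)"
    using 1 a b c d e by linarith
qed simp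

definition R :: "(real \<Rightarrow> real) \<Rightarrow> (real \<Rightarrow> real) \<Rightarrow> bool" where
  "R \<mu> \<nu> \<longleftrightarrow> (\<forall>\<phi>. convex_on UNIV \<phi> \<longrightarrow> Eo \<mu> \<phi> \<le> Eo \<nu> \<phi>)"

lemma step_R:
  assumes mv: "is_move (a, \<delta>)" and ap: "distribution (\<lambda>x. \<mu> x + \<delta> x)"
    and fm: "finite (supp \<mu>)" and fn: "finite (supp \<nu>)" and R: "R \<mu> \<nu>"
  shows "R (\<lambda>x. \<mu> x + \<delta> x) (ext a \<nu>)"
  unfolding R_def
proof (intro allI impI)
  fix \<phi> :: "real \<Rightarrow> real" assume cv: "convex_on UNIV \<phi>"
  have fd: "finite (supp \<delta>)" using mv by (simp add: is_move_def signed_distribution_def)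
  define c1 where "c1 = \<phi> (a+1) - \<phi> a"
  define c0 where "c0 = \<phi> a - c1 * a"
  define \<psi> where "\<psi> x = max (\<phi> x) (c0 + c1 * x)" for x
  have lin: "c0 + c1 * x = \<phi> a + (\<phi> (a+1) - \<phi> a) * (x - a)" for x
    by (simp add: c0_def c1_def algebra_simps)
  have psi_in: "\<psi> x = c0 + c1 * x" if "a \<le> x" "x \<le> a+1" for x
    using cvx_below[OF cv that] unfolding \<psi>_def lin by simp
  have psi_out: "\<psi> x = \<phi> x" if "x \<le> a \<or> a+1 \<le> x" for x
    using cvx_above[OF cv that] unfolding \<psi>_def lin by simp
  have cpsi: "convex_on UNIV \<psi>" unfolding \<psi>_def by (rule cvx_max[OF cv])
  have "Eo (\<lambda>x. \<mu> x + \<delta> x) \<phi> \<le> Eo (\<lambda>x. \<mu> x + \<delta> x) \<psi>"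
    unfolding Eo_def
    by (rule sum_mono, rule mult_left_mono) (use ap in \<open>auto simp: distribution_def \<psi>_def\<close>)
  also have "\<dots> = Eo \<mu> \<psi> + Eo \<delta> \<psi>" by (rule move_Eo[OF fm fd])
  also have "Eo \<delta> \<psi> = 0" by (rule move_affine[OF mv psi_in])
  also have "Eo \<mu> \<psi> \<le> Eo \<nu> \<psi>" using R cpsi by (simp add: R_def)
  also have "Eo \<nu> \<psi> = Eo (ext a \<nu>) \<psi>"
  proof -
    have "(\<Sum>x\<in>Iw a \<nu>. \<nu> x * ((a+1-x) * \<psi> a + (x-a) * \<psi> (a+1) - \<psi> x)) = 0"
    proof (rule sum.neutral, intro ballI)
      fix x assume "x \<in> Iw a \<nu>"
      hence "a < x" "x < a+1" by (auto simp: Iw_def)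
      thus "\<nu> x * ((a+1-x) * \<psi> a + (x-a) * \<psi> (a+1) - \<psi> x) = 0"
        using psi_in[of a] psi_in[of "a+1"] psi_in[of x] by (simp add: algebra_simps)
    qed
    thus ?thesis using ext_Ex[OF fn, of a \<psi>] by simp
  qed
  also have "Eo (ext a \<nu>) \<psi> = Eo (ext a \<nu>) \<phi>"
    unfolding Eo_def
    by (rule sum.cong[OF refl]) (use supp_ext_out psi_out in \<open>force\<close>)
  finally show "Eo (\<lambda>x. \<mu> x + \<delta> x) \<phi> \<le> Eo (ext a \<nu>) \<phi>" by simp
qed



definition Sp :: "(real \<Rightarrow> real) \<Rightarrow> real" where
  "Sp \<nu> = (\<Sum>x\<in>supp \<nu>. \<Sum>y\<in>supp \<nu>. \<nu> x * \<nu> y * \<bar>x - y\<bar>)"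

definition Mo :: "(real \<Rightarrow> real) \<Rightarrow> real" where
  "Mo \<nu> = Eo \<nu> (\<lambda>x. x^2)"

lemma Sp_Eo: "Sp \<nu> = Eo \<nu> (\<lambda>x. Eo \<nu> (\<lambda>y. \<bar>x - y\<bar>))"
  unfolding Sp_def Eo_def by (simp add: sum_distrib_left algebra_simps)

lemma interp:
  fixes x y a :: real
  assumes "a \<le> y" "y \<le> a+1" "x \<le> a \<or> a+1 \<le> x"
  shows "(a+1-y) * \<bar>x - a\<bar> + (y-a) * \<bar>x - (a+1)\<bar> = \<bar>x - y\<bar>"
  using assms(3)
proof
  assume x: "x \<le> a"
  have "\<bar>x - a\<bar> = a - x" "\<bar>x - (a+1)\<bar> = a + 1 - x" "\<bar>x - y\<bar> = y - x" using x assms by auto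
  thus ?thesis by (simp add: algebra_simps)
next
  assume x: "a + 1 \<le> x"
  have "\<bar>x - a\<bar> = x - a" "\<bar>x - (a+1)\<bar> = x - (a + 1)" "\<bar>x - y\<bar> = x - y" using x assms by auto
  thus ?thesis by (simp add: algebra_simps)
qed

lemma interp2:
  fixes x y a :: real
  assumes "a \<le> y" "y \<le> a+1" "x \<le> a \<or> a+1 \<le> x"
  shows "(a+1-y) * \<bar>a - x\<bar> + (y-a) * \<bar>a + 1 - x\<bar> = \<bar>y - x\<bar>"
  using interp[OF assms] by (simp add: abs_minus_commute)

lemma inner2:
  fixes x y a :: real
  assumes "a < x" "x < a+1" "a < y" "y < a+1"
  shows "(a+1-x) * \<bar>a - y\<bar> + (x-a) * \<bar>a + 1 - y\<bar> - \<bar>x - y\<bar> = 2 * (min (x-a) (y-a) - (x-a)*(y-a))"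
  using assms by (auto simp: abs_if min_def algebra_simps)

lemma ext_M:
  assumes "finite (supp \<nu>)"
  shows "Mo (ext a \<nu>) = Mo \<nu> + (\<Sum>x\<in>Iw a \<nu>. \<nu> x * ((x-a) * (1 - (x-a))))"
  unfolding Mo_def ext_Ex[OF assms]
  by (simp, rule sum.cong) (auto simp: power2_eq_square algebra_simps)

lemma ext_mass:
  assumes "finite (supp \<nu>)"
  shows "Eo (ext a \<nu>) (\<lambda>x. 1) = Eo \<nu> (\<lambda>x. 1)"
  unfolding ext_Ex[OF assms] by (simp add: algebra_simps)

lemma ext_dist:
  assumes "distribution \<nu>"
  shows "distribution (ext a \<nu>)"
proof -
  have f: "finite (supp \<nu>)" using assms by (simp add: distribution_def)
  have n: "\<nu> x \<ge> 0" for x using assms by (simp add: distribution_def)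
  have "0 \<le> (\<Sum>y\<in>Iw a \<nu>. \<nu> y * (a+1-y))" using n by (intro sum_nonneg) (auto simp: Iw_def)
  moreover have "0 \<le> (\<Sum>y\<in>Iw a \<nu>. \<nu> y * (y-a))" using n by (intro sum_nonneg) (auto simp: Iw_def)
  ultimately show ?thesis
    using finite_ext[OF f] n unfolding distribution_def by (auto simp: ext_def)
qed

lemma ext_S:
  assumes fin: "finite (supp \<nu>)"
  shows "Sp (ext a \<nu>) = Sp \<nu> + 2 * (\<Sum>x\<in>Iw a \<nu>. \<Sum>y\<in>Iw a \<nu>. \<nu> x * \<nu> y * (min (x-a) (y-a) - (x-a)*(y-a)))"
proof -
  define c where "c x = (\<Sum>y\<in>Iw a \<nu>. \<nu> y * ((a+1-y) * \<bar>x - a\<bar> + (y-a) * \<bar>x - (a+1)\<bar> - \<bar>x - y\<bar>))" for x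
  have inner: "Eo (ext a \<nu>) (\<lambda>y. \<bar>x - y\<bar>) = Eo \<nu> (\<lambda>y. \<bar>x - y\<bar>) + c x" for x
    unfolding ext_Ex[OF fin] c_def by simp
  have c0: "c x = 0" if "x \<le> a \<or> a+1 \<le> x" for x
    unfolding c_def by (rule sum.neutral) (use interp that in \<open>auto simp: Iw_def\<close>)
  have "Sp (ext a \<nu>) = Eo (ext a \<nu>) (\<lambda>x. Eo \<nu> (\<lambda>y. \<bar>x - y\<bar>) + c x)"
    by (simp add: Sp_Eo inner)
  also have "\<dots> = Eo (ext a \<nu>) (\<lambda>x. Eo \<nu> (\<lambda>y. \<bar>x - y\<bar>))"
    unfolding Eo_def
    by (rule sum.cong[OF refl]) (use supp_ext_out c0 in force)
  also have "\<dots> = Sp \<nu> + (\<Sum>x\<in>Iw a \<nu>. \<nu> x * ((a+1-x) * Eo \<nu> (\<lambda>y. \<bar>a - y\<bar>) + (x-a) * Eo \<nu> (\<lambda>y. \<bar>a + 1 - y\<bar>) - Eo \<nu> (\<lambda>y. \<bar>x - y\<bar>)))"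
    unfolding ext_Ex[OF fin] Sp_Eo by (simp add: add.commute)
  also have "(\<Sum>x\<in>Iw a \<nu>. \<nu> x * ((a+1-x) * Eo \<nu> (\<lambda>y. \<bar>a - y\<bar>) + (x-a) * Eo \<nu> (\<lambda>y. \<bar>a + 1 - y\<bar>) - Eo \<nu> (\<lambda>y. \<bar>x - y\<bar>)))
     = (\<Sum>x\<in>Iw a \<nu>. \<nu> x * (\<Sum>y\<in>Iw a \<nu>. \<nu> y * (2 * (min (x-a) (y-a) - (x-a)*(y-a)))))"
  proof (rule sum.cong[OF refl])
    fix x assume x: "x \<in> Iw a \<nu>"
    have xi: "a < x" "x < a+1" using x by (auto simp: Iw_def)
    have "(a+1-x) * Eo \<nu> (\<lambda>y. \<bar>a - y\<bar>) + (x-a) * Eo \<nu> (\<lambda>y. \<bar>a + 1 - y\<bar>) - Eo \<nu> (\<lambda>y. \<bar>x - y\<bar>)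
        = (\<Sum>y\<in>supp \<nu>. \<nu> y * ((a+1-x) * \<bar>a - y\<bar> + (x-a) * \<bar>a + 1 - y\<bar> - \<bar>x - y\<bar>))"
      unfolding Eo_def by (simp add: sum_distrib_left sum_subtractf[symmetric] sum.distrib[symmetric] algebra_simps)
    also have "\<dots> = (\<Sum>y\<in>Iw a \<nu>. \<nu> y * ((a+1-x) * \<bar>a - y\<bar> + (x-a) * \<bar>a + 1 - y\<bar> - \<bar>x - y\<bar>))"
    proof (rule sum.mono_neutral_right)
      show "finite (supp \<nu>)" by (rule fin)
      show "Iw a \<nu> \<subseteq> supp \<nu>" by (auto simp: Iw_def)
      show "\<forall>y\<in>supp \<nu> - Iw a \<nu>. \<nu> y * ((a+1-x) * \<bar>a - y\<bar> + (x-a) * \<bar>a + 1 - y\<bar> - \<bar>x - y\<bar>) = 0"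
      proof
        fix y assume "y \<in> supp \<nu> - Iw a \<nu>"
        hence "y \<le> a \<or> a+1 \<le> y" by (auto simp: Iw_def)
        thus "\<nu> y * ((a+1-x) * \<bar>a - y\<bar> + (x-a) * \<bar>a + 1 - y\<bar> - \<bar>x - y\<bar>) = 0"
          using interp2[of a x y] xi by simp
      qed
    qed
    also have "\<dots> = (\<Sum>y\<in>Iw a \<nu>. \<nu> y * (2 * (min (x-a) (y-a) - (x-a)*(y-a))))"
      by (rule sum.cong[OF refl]) (use xi inner2 in \<open>auto simp: Iw_def\<close>)
    finally show "\<nu> x * ((a+1-x) * Eo \<nu> (\<lambda>y. \<bar>a - y\<bar>) + (x-a) * Eo \<nu> (\<lambda>y. \<bar>a + 1 - y\<bar>) - Eo \<nu> (\<lambda>y. \<bar>x - y\<bar>))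
       = \<nu> x * (\<Sum>y\<in>Iw a \<nu>. \<nu> y * (2 * (min (x-a) (y-a) - (x-a)*(y-a))))" by simp
  qed
  also have "\<dots> = 2 * (\<Sum>x\<in>Iw a \<nu>. \<Sum>y\<in>Iw a \<nu>. \<nu> x * \<nu> y * (min (x-a) (y-a) - (x-a)*(y-a)))"
    by (simp add: sum_distrib_left algebra_simps)
  finally show ?thesis .
qed



fun extp :: "real list \<Rightarrow> (real \<Rightarrow> real) \<Rightarrow> (real \<Rightarrow> real)" where
  "extp [] \<nu> = \<nu>"
| "extp (a # as) \<nu> = extp as (ext a \<nu>)"

lemma ext_step:
  assumes fin: "finite (supp \<nu>)"
  shows "(Mo (ext a \<nu>) - Mo \<nu>)^2 \<le> (Sp (ext a \<nu>) - Sp \<nu>)/6 \<and> Sp \<nu> \<le> Sp (ext a \<nu>)"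
proof -
  define Q where "Q = (\<Sum>x\<in>Iw a \<nu>. \<nu> x * ((x-a) * (1 - (x-a))))"
  define D where "D = (\<Sum>x\<in>Iw a \<nu>. \<Sum>y\<in>Iw a \<nu>. \<nu> x * \<nu> y * (min (x-a) (y-a) - (x-a)*(y-a)))"
  have fI: "finite (Iw a \<nu>)" using fin by (simp add: Iw_def)
  have G: "3 * Q^2 \<le> D"
    unfolding Q_def D_def
    by (rule G_ineq[OF fI, of "\<lambda>x. x - a" \<nu>]) (auto simp: Iw_def)
  have e1: "Mo (ext a \<nu>) = Mo \<nu> + Q" using ext_M[OF fin, of a] by (simp add: Q_def)
  have e2: "Sp (ext a \<nu>) = Sp \<nu> + 2 * D" using ext_S[OF fin, of a] by (simp add: D_def)
  have q0: "0 \<le> Q^2" by simp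
  have 1: "Q^2 \<le> (2 * D) / 6" using G by linarith
  have 2: "0 \<le> D" using G q0 by linarith
  show ?thesis unfolding e1 e2 using 1 2 by simp
qed

lemma arith_step:
  fixes x y X Y k :: real
  assumes "x^2 \<le> k * X / 6" "y^2 \<le> Y/6" "0 \<le> X" "0 \<le> Y" "0 \<le> k"
  shows "(x + y)^2 \<le> (k + 1) * (X + Y) / 6"
proof (cases "k = 0")
  case True
  hence "x = 0" using assms(1) by simp
  thus ?thesis using True assms by simp
next
  case False
  hence k: "0 < k" using assms by simp
  have "k * (x + y)^2 \<le> (k + 1) * (x^2 + k * y^2)"
  proof -
    have "0 \<le> (x - k * y)^2" by simp
    thus ?thesis by (simp add: power2_eq_square algebra_simps)
  qed
  also have "\<dots> \<le> (k + 1) * (k * X / 6 + k * (Y / 6))"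
    using assms k by (intro mult_left_mono add_mono mult_left_mono) auto
  also have "\<dots> = k * ((k + 1) * (X + Y) / 6)" by (simp add: field_simps)
  finally show ?thesis using k by simp
qed

lemma extp_prop:
  assumes "finite (supp \<nu>)"
  shows "(Mo (extp as \<nu>) - Mo \<nu>)^2 \<le> real (length as) * (Sp (extp as \<nu>) - Sp \<nu>)/6 \<and> Sp \<nu> \<le> Sp (extp as \<nu>)"
  using assms
proof (induction as arbitrary: \<nu>)
  case Nil
  then show ?case by simp
next
  case (Cons a as)
  have f1: "finite (supp (ext a \<nu>))" by (rule finite_ext[OF Cons.prems])
  have IH: "(Mo (extp as (ext a \<nu>)) - Mo (ext a \<nu>))^2 \<le> real (length as) * (Sp (extp as (ext a \<nu>)) - Sp (ext a \<nu>))/6"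
     "Sp (ext a \<nu>) \<le> Sp (extp as (ext a \<nu>))"
    using Cons.IH[OF f1] by auto
  have st: "(Mo (ext a \<nu>) - Mo \<nu>)^2 \<le> (Sp (ext a \<nu>) - Sp \<nu>)/6" "Sp \<nu> \<le> Sp (ext a \<nu>)"
    using ext_step[OF Cons.prems] by auto
  have "((Mo (extp as (ext a \<nu>)) - Mo (ext a \<nu>)) + (Mo (ext a \<nu>) - Mo \<nu>))^2
      \<le> (real (length as) + 1) * ((Sp (extp as (ext a \<nu>)) - Sp (ext a \<nu>)) + (Sp (ext a \<nu>) - Sp \<nu>)) / 6"
    by (rule arith_step) (use IH st in auto)
  thus ?case using IH st by (simp add: algebra_simps)
qed

lemma extp_dist:
  assumes "distribution \<nu>"
  shows "distribution (extp as \<nu>) \<and> Eo (extp as \<nu>) (\<lambda>x. 1) = Eo \<nu> (\<lambda>x. 1)"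
  using assms
proof (induction as arbitrary: \<nu>)
  case Nil
  then show ?case by simp
next
  case (Cons a as)
  have d: "distribution (ext a \<nu>)" by (rule ext_dist[OF Cons.prems])
  have "Eo (ext a \<nu>) (\<lambda>x. 1) = Eo \<nu> (\<lambda>x. 1)"
    using ext_mass Cons.prems by (simp add: distribution_def)
  thus ?case using Cons.IH[OF d] by simp
qed

lemma R_refl: "R \<mu> \<mu>" by (simp add: R_def)

lemma dom:
  assumes "transforms vs \<mu> \<nu>" "distribution \<mu>" "finite (supp \<nu>0)" "R \<mu> \<nu>0"
  shows "R \<nu> (extp (map fst vs) \<nu>0) \<and> distribution \<nu>"
  using assms
proof (induction arbitrary: \<nu>0 rule: transforms.induct)
  case (Nil \<mu>)
  then show ?case by simp
next
  case (Cons v \<mu> vs \<nu>)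
  obtain a \<delta> where v: "v = (a, \<delta>)" by (cases v)
  have ap: "apply_move v \<mu> = (\<lambda>x. \<mu> x + \<delta> x)" by (simp add: apply_move_def v)
  have da: "distribution (\<lambda>x. \<mu> x + \<delta> x)"
    using Cons.hyps(2) by (simp add: move_applies_def v)
  have Rn: "R (\<lambda>x. \<mu> x + \<delta> x) (ext a \<nu>0)"
    by (rule step_R) (use Cons.hyps(1) Cons.prems da v in \<open>auto simp: distribution_def\<close>)
  have "R \<nu> (extp (map fst vs) (ext a \<nu>0)) \<and> distribution \<nu>"
    using Cons.IH[of "ext a \<nu>0"] ap da Rn finite_ext[OF Cons.prems(2)] by simp
  thus ?case by (simp add: v)
qed

lemma cheb:
  assumes "distribution \<nu>" "mass \<nu> {x. \<bar>x\<bar> \<ge> d} \<ge> p" "d > 0"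
  shows "p * d^2 \<le> Mo \<nu>"
proof -
  have n: "\<nu> x \<ge> 0" for x using assms(1) by (simp add: distribution_def)
  have f: "finite (supp \<nu>)" using assms(1) by (simp add: distribution_def)
  have "p * d^2 \<le> (\<Sum>x\<in>supp \<nu> \<inter> {x. \<bar>x\<bar> \<ge> d}. \<nu> x) * d^2"
    using assms by (intro mult_right_mono) (auto simp: mass_def)
  also have "\<dots> = (\<Sum>x\<in>supp \<nu> \<inter> {x. \<bar>x\<bar> \<ge> d}. \<nu> x * d^2)" by (simp add: sum_distrib_right)
  also have "\<dots> \<le> (\<Sum>x\<in>supp \<nu> \<inter> {x. \<bar>x\<bar> \<ge> d}. \<nu> x * x^2)"
  proof (rule sum_mono)
    fix x assume "x \<in> supp \<nu> \<inter> {x. \<bar>x\<bar> \<ge> d}"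
    hence "d^2 \<le> x^2" using assms(3) by (simp add: abs_le_square_iff[symmetric])
    thus "\<nu> x * d^2 \<le> \<nu> x * x^2" using n by (intro mult_left_mono) auto
  qed
  also have "\<dots> \<le> (\<Sum>x\<in>supp \<nu>. \<nu> x * x^2)"
    using f n by (intro sum_mono2) auto
  finally show ?thesis by (simp add: Mo_def Eo_def)
qed

lemma fin_arith:
  fixes M S n p d :: real
  assumes "M^2 \<le> n * S / 6" "S^2 \<le> 4/3 * M" "0 \<le> S" "p * d^2 \<le> M" "0 < p" "0 < d"
  shows "(3 * p) powr (3/2) * d^3 \<le> n"
proof -
  have Mp: "0 < M" using assms by (smt (verit) mult_pos_pos zero_less_power)
  have "S \<le> sqrt (4/3 * M)" using assms(2,3) real_le_rsqrt by blast
  also have "sqrt (4/3 * M) = 2 * sqrt M / sqrt 3"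
    by (simp add: real_sqrt_mult real_sqrt_divide)
  finally have S: "S \<le> 2 * sqrt M / sqrt 3" .
  have n0: "0 \<le> n"
  proof (rule ccontr)
    assume "\<not> 0 \<le> n"
    hence "n * S \<le> 0" using assms(3) by (simp add: mult_nonpos_nonneg)
    moreover have "0 < M^2" using Mp by simp
    ultimately show False using assms(1) by linarith
  qed
  have "M^2 \<le> n * (2 * sqrt M / sqrt 3) / 6"
    using assms(1) S n0 by (smt (verit) divide_right_mono mult_left_mono)
  moreover have "M^2 = (M * sqrt M) * sqrt M" using Mp by (simp add: power2_eq_square)
  moreover have "n * (2 * sqrt M / sqrt 3) / 6 = (n / (3 * sqrt 3)) * sqrt M" by (simp add: field_simps)
  ultimately have "(M * sqrt M) * sqrt M \<le> (n / (3 * sqrt 3)) * sqrt M" by simp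
  hence "M * sqrt M \<le> n / (3 * sqrt 3)"
    using Mp by (simp add: mult_right_le_imp_le)
  hence key: "3 * sqrt 3 * (M * sqrt M) \<le> n"
    by (simp add: field_simps)
  have "sqrt (p * d^2) \<le> sqrt M" using assms(4) by simp
  also have "sqrt (p * d^2) = sqrt p * d" using assms by (simp add: real_sqrt_mult)
  finally have sq: "sqrt p * d \<le> sqrt M" .
  have "(p * d^2) * (sqrt p * d) \<le> M * sqrt M"
    using assms sq Mp by (intro mult_mono) auto
  hence "3 * sqrt 3 * ((p * d^2) * (sqrt p * d)) \<le> n" using key by (smt (verit) mult_left_mono real_sqrt_ge_zero)
  moreover have "(3 * p) powr (3/2) = 3 * p * (sqrt 3 * sqrt p)"
  proof -
    have h: "(3::real)/2 = 1 + 1/2" by simp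
    have "(3 * p) powr (3/2) = (3 * p) powr (1 + 1/2)" by (simp only: h)
    also have "\<dots> = (3 * p) powr 1 * (3 * p) powr (1/2)" by (rule powr_add)
    also have "\<dots> = (3 * p) * sqrt (3 * p)" using assms by (simp add: powr_half_sqrt)
    finally show ?thesis by (simp add: real_sqrt_mult)
  qed
  ultimately show ?thesis by (simp add: power2_eq_square power3_eq_cube algebra_simps)
qed



theorem mainTheorem13:
  fixes d p :: real and vs :: "move list" and \<nu> :: "real \<Rightarrow> real"
  assumes "d > 0" and "0 < p" and "p < 1"
    and "transforms vs unit_at_zero \<nu>"
    and "mass \<nu> {x. \<bar>x\<bar> \<ge> d} \<ge> p"
  shows "real (length vs) \<ge> (3 * p) powr (3/2) * d ^ 3"
proof -
  have su: "supp unit_at_zero = {0}" by (auto simp: supp_def unit_at_zero_def)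
  have du: "distribution unit_at_zero"
    using su by (auto simp: distribution_def unit_at_zero_def)
  define E where "E = extp (map fst vs) unit_at_zero"
  have D: "R \<nu> E \<and> distribution \<nu>"
    unfolding E_def by (rule dom[OF assms(4) du]) (auto simp: su R_refl)
  have MM: "Mo \<nu> \<le> Mo E"
    using D convex_power2 unfolding R_def Mo_def by auto
  have ch: "p * d^2 \<le> Mo \<nu>" by (rule cheb) (use D assms in auto)
  have Mu: "Mo unit_at_zero = 0" by (simp add: Mo_def Eo_def su)
  have Su: "Sp unit_at_zero = 0" by (simp add: Sp_def su)
  have P: "(Mo E)^2 \<le> real (length vs) * Sp E / 6"
    using extp_prop[of unit_at_zero "map fst vs"] su Mu Su unfolding E_def by simp
  have eu: "Eo unit_at_zero (\<lambda>x. 1) = 1" unfolding Eo_def su by (simp add: unit_at_zero_def)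
  have DE: "distribution E \<and> Eo E (\<lambda>x. 1) = 1"
    using extp_dist[OF du, of "map fst vs"] eu unfolding E_def by simp
  have fE: "finite (supp E)" and nE: "\<And>x. 0 \<le> E x" using DE by (auto simp: distribution_def)
  have "(Sp E)^2 \<le> 4/3 * Mo E"
    unfolding Sp_def Mo_def Eo_def
    by (rule gini[OF fE]) (use nE DE in \<open>auto simp: Eo_def\<close>)
  moreover have "0 \<le> Sp E" unfolding Sp_def using nE by (intro sum_nonneg mult_nonneg_nonneg) auto
  ultimately show ?thesis
    by (intro fin_arith[OF P]) (use ch MM assms in auto)
qed


end
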